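(* Let $\mathbb K\subset\mathbb{R}^{d_{\mathrm{input}}}$ be bounded and let $\tilde g:\mathbb K\to\mathbb{R}$ be 1-Lipschitz with respect to the $\ell_\infty$-norm, i.e. $|\tilde g(\mathbf x_1)-\tilde g(\mathbf x_2)|\le\|\mathbf x_1-\mathbf x_2\|_\infty$. Then for every $\epsilon>0$ there exists an $\ell_\infty$-dist net $g$ with scalar output, all of whose layers have width at most $d_{\mathrm{input}}+2$, such that $|g(\mathbf x)-\tilde g(\mathbf x)|\le\epsilon$ for all $\mathbf x\in\mathbb K$.
   Context: An $L$-layer $\ell_\infty$-dist net takes $\mathbf x^{(0)}=\mathbf x\in\mathbb{R}^{d_{\mathrm{input}}}$ and computes, for $1\le l\le L$, $1\le k\le d_l$, $x^{(l)}_k=\|\mathbf x^{(l-1)}-\mathbf w^{(l,k)}\|_\infty+b^{(l,k)}$, with arbitrary real parameters $\mathbf w^{(l,k)}\in\mathbb{R}^{d_{l-1}}$ ($d_0=d_{\mathrm{input}}$) and $b^{(l,k)}\in\mathbb{R}$; its width is $\max_l d_l$. For a scalar-output net ($d_L=1$) the computed function is $g(\mathbf x)=-x^{(L)}_1$. The depth $L$ is arbitrary (finite). *)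

theory Defs
  imports "HOL-Analysis.Analysis"
begin

text \<open>Vectors in R^n are represented as real lists of length n.
  The l-infinity distance of two vectors of equal length.\<close>
definition linf_norm :: "real list \<Rightarrow> real" where
  "linf_norm v = foldr (\<lambda>a m. max \<bar>a\<bar> m) v 0"

definition linf_dist :: "real list \<Rightarrow> real list \<Rightarrow> real" where
  "linf_dist x w = linf_norm (map2 (-) x w)"

type_synonym neuron = "real list \<times> real"
type_synonym layer = "neuron list"
type_synonym net = "layer list"

definition eval_layer :: "layer \<Rightarrow> real list \<Rightarrow> real list" where
  "eval_layer ly x = map (\<lambda>(w, b). linf_dist x w + b) ly"

definition eval_net :: "net \<Rightarrow> real list \<Rightarrow> real list" where
  "eval_net N x = foldl (\<lambda>v ly. eval_layer ly v) x N"

fun wf_layers :: "nat \<Rightarrow> net \<Rightarrow> bool" where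
  "wf_layers d [] = True"
| "wf_layers d (ly # N) =
     (ly \<noteq> [] \<and> (\<forall>(w, b) \<in> set ly. length w = d) \<and> wf_layers (length ly) N)"

definition wf_net :: "nat \<Rightarrow> net \<Rightarrow> bool" where
  "wf_net d N = (N \<noteq> [] \<and> wf_layers d N)"

definition width :: "net \<Rightarrow> nat" where
  "width N = Max (set (0 # map length N))"

definition scalar_net :: "nat \<Rightarrow> net \<Rightarrow> bool" where
  "scalar_net d N = (wf_net d N \<and> length (last N) = 1)"

definition net_fun :: "net \<Rightarrow> real list \<Rightarrow> real" where
  "net_fun N x = - hd (eval_net N x)"

end

theory Submission
  imports Defs
begin

lemma linf_norm_Max: "linf_norm v = Max (insert 0 (abs ` set v))"
proof (induction v)
  case Nil then show ?case by (simp add: linf_norm_def)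
next
  case (Cons a v)
  have "linf_norm (a # v) = max \<bar>a\<bar> (linf_norm v)" by (simp add: linf_norm_def)
  also have "\<dots> = Max (insert \<bar>a\<bar> (insert 0 (abs ` set v)))"
    using Cons by (simp add: Max_insert)
  finally show ?case by (simp add: insert_commute)
qed

lemma set_map2_nth:
  assumes "length v = n" "length w = n"
  shows "set (map2 f v w) = (\<lambda>j. f (v!j) (w!j)) ` {..<n}"
  using assms by (auto simp: set_zip image_def)

lemma linf_dist_Max:
  assumes "length v = n" "length w = n"
  shows "linf_dist v w = Max (insert 0 ((\<lambda>j. \<bar>v!j - w!j\<bar>) ` {..<n}))"
proof -
  have "abs ` set (map2 (-) v w) = (\<lambda>j. \<bar>v!j - w!j\<bar>) ` {..<n}"
    using set_map2_nth[OF assms, of "(-)"] by (simp add: image_image)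
  then show ?thesis by (simp add: linf_dist_def linf_norm_Max)
qed

lemma linf_dist_ge0: "linf_dist v w \<ge> 0"
  by (simp add: linf_dist_def linf_norm_Max)

lemma linf_dist_le:
  assumes "length x = d" "length s = d" "\<forall>j<d. \<bar>x!j - s!j\<bar> \<le> t" "t \<ge> 0"
  shows "linf_dist x s \<le> t"
  using assms by (simp add: linf_dist_Max)

lemma linf_norm_nth: "i < length v \<Longrightarrow> \<bar>v!i\<bar> \<le> linf_norm v"
  by (simp add: linf_norm_Max)

lemma max_abs_Max:
  fixes f :: "'a \<Rightarrow> real"
  assumes "finite I" "I \<noteq> {}"
  shows "max (Max (f ` I)) (Max ((\<lambda>j. - f j) ` I)) = Max (insert 0 ((\<lambda>j. \<bar>f j\<bar>) ` I))"
proof (rule antisym)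
  show "max (Max (f ` I)) (Max ((\<lambda>j. - f j) ` I)) \<le> Max (insert 0 ((\<lambda>j. \<bar>f j\<bar>) ` I))"
  proof -
    have "f a \<le> Max (insert 0 ((\<lambda>j. \<bar>f j\<bar>) ` I))" "- f a \<le> Max (insert 0 ((\<lambda>j. \<bar>f j\<bar>) ` I))" if "a \<in> I" for a
    proof -
      have "\<bar>f a\<bar> \<le> Max (insert 0 ((\<lambda>j. \<bar>f j\<bar>) ` I))"
        using assms that by (intro Max_ge) auto
      then show "f a \<le> Max (insert 0 ((\<lambda>j. \<bar>f j\<bar>) ` I))" by linarith
      show "- f a \<le> Max (insert 0 ((\<lambda>j. \<bar>f j\<bar>) ` I))" using \<open>\<bar>f a\<bar> \<le> _\<close> by linarith
    qed
    then show ?thesis using assms by (auto simp: Max_le_iff)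
  qed
  show "Max (insert 0 ((\<lambda>j. \<bar>f j\<bar>) ` I)) \<le> max (Max (f ` I)) (Max ((\<lambda>j. - f j) ` I))"
  proof -
    have h: "\<bar>f j\<bar> \<le> max (Max (f ` I)) (Max ((\<lambda>j. - f j) ` I))" if "j \<in> I" for j
    proof -
      have "f j \<le> Max (f ` I)" "- f j \<le> Max ((\<lambda>j. - f j) ` I)" using assms that by auto
      then show ?thesis by linarith
    qed
    obtain a where "a \<in> I" using assms by blast
    then have "0 \<le> max (Max (f ` I)) (Max ((\<lambda>j. - f j) ` I))" using h[of a] by linarith
    then show ?thesis using h assms by (simp add: Max_le_iff)
  qed
qed

definition gn :: "nat \<Rightarrow> real \<Rightarrow> nat set \<Rightarrow> (nat \<Rightarrow> real) \<Rightarrow> (nat \<Rightarrow> real) \<Rightarrow> real \<Rightarrow> neuron" where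
  "gn n C J \<sigma> c b = (map (\<lambda>j. if j \<in> J then c j - \<sigma> j * C else 0) [0..<n], b - C)"

lemma gn_len: "length (fst (gn n C J \<sigma> c b)) = n" by (simp add: gn_def)

lemma gn_eval:
  assumes len: "length v = n" and J: "J \<noteq> {}" "J \<subseteq> {..<n}"
    and vR: "\<forall>j<n. \<bar>v!j\<bar> \<le> R" and cR: "\<forall>j\<in>J. \<bar>c j\<bar> \<le> R"
    and sg: "\<forall>j\<in>J. \<sigma> j = 1 \<or> \<sigma> j = -1" and C: "3*R < C"
  shows "linf_dist v (fst (gn n C J \<sigma> c b)) + snd (gn n C J \<sigma> c b)
           = Max ((\<lambda>j. \<sigma> j * (v!j - c j)) ` J) + b"
proof -
  define w where "w = fst (gn n C J \<sigma> c b)"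
  define T where "T = (\<lambda>j. \<sigma> j * (v!j - c j))"
  have lw: "length w = n" by (simp add: w_def gn_len)
  have fin: "finite J" using J(2) finite_subset by blast
  obtain j0 where j0: "j0 \<in> J" using J by blast
  have R0: "R \<ge> 0" using vR j0 J(2) by force
  have wj: "w!j = (if j \<in> J then c j - \<sigma> j * C else 0)" if "j < n" for j
    using that by (simp add: w_def gn_def)
  have inJ: "\<bar>v!j - w!j\<bar> = C + T j" if "j \<in> J" for j
  proof -
    have jn: "j < n" using that J(2) by auto
    have a: "\<bar>v!j\<bar> \<le> R" "\<bar>c j\<bar> \<le> R" using vR jn cR that by auto
    show ?thesis using sg that a C unfolding wj[OF jn] T_def by auto
  qed
  have Tlow: "T j \<ge> -2*R" if "j \<in> J" for j
  proof -
    have jn: "j < n" using that J(2) by auto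
    have a: "\<bar>v!j\<bar> \<le> R" "\<bar>c j\<bar> \<le> R" using vR jn cR that by auto
    show ?thesis using sg that a unfolding T_def by auto
  qed
  have notJ: "\<bar>v!j - w!j\<bar> \<le> R" if "j < n" "j \<notin> J" for j
    using that vR wj by auto
  have MT: "Max (T ` J) \<in> T ` J" using fin J by simp
  then obtain jm where jm: "jm \<in> J" "Max (T ` J) = T jm" by auto
  have "Max (insert 0 ((\<lambda>j. \<bar>v!j - w!j\<bar>) ` {..<n})) = C + Max (T ` J)"
  proof (rule antisym)
    show "Max (insert 0 ((\<lambda>j. \<bar>v!j - w!j\<bar>) ` {..<n})) \<le> C + Max (T ` J)"
    proof (subst Max_le_iff, simp, simp, intro ballI)
      fix y assume "y \<in> insert 0 ((\<lambda>j. \<bar>v!j - w!j\<bar>) ` {..<n})"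
      moreover have "C + Max (T ` J) \<ge> R" using Tlow[OF jm(1)] jm C by linarith
      moreover have "T j \<le> Max (T ` J)" if "j \<in> J" for j using fin that by simp
      ultimately show "y \<le> C + Max (T ` J)" using inJ notJ R0
        by (smt (verit, best) image_iff insert_iff lessThan_iff)
    qed
    show "C + Max (T ` J) \<le> Max (insert 0 ((\<lambda>j. \<bar>v!j - w!j\<bar>) ` {..<n}))"
      using jm inJ[OF jm(1)] J(2) by (intro Max_ge_iff[THEN iffD2]) (auto intro!: bexI[of _ jm])
  qed
  then have "linf_dist v w = C + Max (T ` J)" using linf_dist_Max[OF len lw] by simp
  then show ?thesis by (simp add: w_def T_def gn_def)
qed


definition cp :: "nat \<Rightarrow> real \<Rightarrow> nat \<Rightarrow> neuron" where
  "cp n C i = gn n C {i} (\<lambda>_. 1) (\<lambda>_. 0) 0"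

lemma cp_eval:
  assumes "length v = n" "i < n" "\<forall>j<n. \<bar>v!j\<bar> \<le> R" "3*R < C"
  shows "linf_dist v (fst (cp n C i)) + snd (cp n C i) = v!i"
proof -
  have "R \<ge> 0" using assms(2,3) by force
  then show ?thesis
    using gn_eval[OF assms(1), of "{i}" R "\<lambda>_. 0" "\<lambda>_. 1" C 0] assms by (simp add: cp_def)
qed

lemma eval_copies:
  assumes "length v = n" "d \<le> n" "\<forall>j<n. \<bar>v!j\<bar> \<le> R" "3*R < C" "v = x @ rest" "length x = d"
  shows "map (\<lambda>(w, b). linf_dist v w + b) (map (cp n C) [0..<d]) = x"
proof -
  have "map (\<lambda>(w, b). linf_dist v w + b) (map (cp n C) [0..<d]) = map (\<lambda>i. v!i) [0..<d]"
    using cp_eval[OF assms(1) _ assms(3,4)] assms(2)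
    by (auto simp: case_prod_beta)
  also have "\<dots> = map (\<lambda>i. x!i) [0..<length x]" using assms(5,6) by (auto simp: nth_append)
  also have "\<dots> = x" by (rule map_nth)
  finally show ?thesis .
qed

definition LA :: "nat \<Rightarrow> real \<Rightarrow> real list \<Rightarrow> layer" where
  "LA d C s = map (cp (d+2) C) [0..<d] @ [cp (d+2) C d, gn (d+2) C {..<d} (\<lambda>_. 1) (\<lambda>j. s!j) 0]"

definition LB :: "nat \<Rightarrow> real \<Rightarrow> real list \<Rightarrow> real \<Rightarrow> layer" where
  "LB d C s a = map (cp (d+2) C) [0..<d] @ [cp (d+2) C d,
     gn (d+2) C (insert (Suc d) {..<d}) (\<lambda>j. if j = Suc d then 1 else -1) (\<lambda>j. if j = Suc d then 0 else s!j) a]"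

definition LC :: "nat \<Rightarrow> real \<Rightarrow> layer" where
  "LC d C = map (cp (d+2) C) [0..<d] @ [gn (d+2) C {d, Suc d} (\<lambda>j. if j = d then 1 else -1) (\<lambda>_. 0) 0, cp (d+2) C d]"

lemma state_bound:
  assumes "length x = d" "\<forall>j<d. \<bar>x!j\<bar> \<le> R" "\<bar>N\<bar> \<le> R" "\<bar>T\<bar> \<le> R"
  shows "\<forall>j<d+2. \<bar>(x @ [N, T])!j\<bar> \<le> R"
proof (intro allI impI)
  fix j assume "j < d+2"
  then have "j < d \<or> j = d \<or> j = Suc d" by auto
  then show "\<bar>(x @ [N, T])!j\<bar> \<le> R" using assms by (auto simp: nth_append)
qed

lemma step_eval:
  assumes lx: "length x = d" and ls: "length s = d" and d: "d > 0"
    and xM: "\<forall>j<d. \<bar>x!j\<bar> \<le> M" and sM: "\<forall>j<d. \<bar>s!j\<bar> \<le> M"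
    and a: "\<bar>a\<bar> \<le> G" and N: "\<bar>N\<bar> \<le> R" and T: "\<bar>T\<bar> \<le> R"
    and R: "2*M + G \<le> R" "M \<ge> 0" "G \<ge> 0" and C: "3*R < C"
  shows "eval_layer (LC d C) (eval_layer (LB d C s a) (eval_layer (LA d C s) (x @ [N, T])))
          = x @ [max N (-(a + linf_dist x s)), N]"
proof -
  have xR: "\<forall>j<d. \<bar>x!j\<bar> \<le> R" using xM R by force
  have sR: "\<forall>j<d. \<bar>s!j\<bar> \<le> R" using sM R by force
  have fin: "finite {..<d}" "{..<d} \<noteq> {}" using d by auto
  define P where "P = Max ((\<lambda>j. x!j - s!j) ` {..<d})"
  have P_in: "P \<in> (\<lambda>j. x!j - s!j) ` {..<d}" unfolding P_def using fin by simp
  have PR: "\<bar>P\<bar> \<le> R" using P_in xM sM R by force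
  have "eval_layer (LA d C s) (x @ [N, T]) = x @ [N, P]"
  proof -
    let ?v = "x @ [N, T]"
    have lv: "length ?v = d + 2" using lx by simp
    have vb: "\<forall>j<d+2. \<bar>?v!j\<bar> \<le> R" using state_bound[OF lx xR N T] .
    have e1: "linf_dist ?v (fst (cp (d+2) C d)) + snd (cp (d+2) C d) = N"
      using cp_eval[OF lv _ vb C, of d] lx by (simp add: nth_append)
    have "linf_dist ?v (fst (gn (d+2) C {..<d} (\<lambda>_. 1) (\<lambda>j. s!j) 0)) + snd (gn (d+2) C {..<d} (\<lambda>_. 1) (\<lambda>j. s!j) 0)
        = Max ((\<lambda>j. 1 * (?v!j - s!j)) ` {..<d}) + 0"
      using gn_eval[OF lv _ _ vb, of "{..<d}" "\<lambda>j. s!j" "\<lambda>_. 1" C 0] fin sR C by auto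
    also have "\<dots> = P" unfolding P_def using lx by (auto simp: nth_append intro!: arg_cong[where f=Max] image_cong)
    finally have e2: "linf_dist ?v (fst (gn (d+2) C {..<d} (\<lambda>_. 1) (\<lambda>j. s!j) 0)) + snd (gn (d+2) C {..<d} (\<lambda>_. 1) (\<lambda>j. s!j) 0) = P" .
    show ?thesis unfolding eval_layer_def LA_def
      using eval_copies[OF lv _ vb C refl lx] e1 e2 by (simp add: case_prod_beta)
  qed
  moreover
  define Q where "Q = a + linf_dist x s"
  have Q0: "linf_dist x s \<ge> 0" by (rule linf_dist_ge0)
  have Q1: "linf_dist x s \<le> 2*M" using linf_dist_le[OF lx ls, of "2*M"] xM sM R
    by (smt (verit, best) abs_triangle_ineq4)
  have QR: "\<bar>Q\<bar> \<le> R" using Q0 Q1 a R unfolding Q_def by linarith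
  have "eval_layer (LB d C s a) (x @ [N, P]) = x @ [N, Q]"
  proof -
    let ?v = "x @ [N, P]"
    have lv: "length ?v = d + 2" using lx by simp
    have vb: "\<forall>j<d+2. \<bar>?v!j\<bar> \<le> R" using state_bound[OF lx xR N PR] .
    have e1: "linf_dist ?v (fst (cp (d+2) C d)) + snd (cp (d+2) C d) = N"
      using cp_eval[OF lv _ vb C, of d] lx by (simp add: nth_append)
    let ?g = "gn (d+2) C (insert (Suc d) {..<d}) (\<lambda>j. if j = Suc d then 1 else -1) (\<lambda>j. if j = Suc d then 0 else s!j) a"
    have "linf_dist ?v (fst ?g) + snd ?g
        = Max ((\<lambda>j. (if j = Suc d then 1 else -1) * (?v!j - (if j = Suc d then 0 else s!j))) ` insert (Suc d) {..<d}) + a"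
      using gn_eval[OF lv _ _ vb, of "insert (Suc d) {..<d}" "\<lambda>j. if j = Suc d then 0 else s!j" "\<lambda>j. if j = Suc d then 1 else -1" C a] sR C R
      by auto
    also have "Max ((\<lambda>j. (if j = Suc d then 1 else -1) * (?v!j - (if j = Suc d then 0 else s!j))) ` insert (Suc d) {..<d})
        = max P (Max ((\<lambda>j. - (x!j - s!j)) ` {..<d}))"
    proof -
      have "(\<lambda>j. (if j = Suc d then 1 else -1) * (?v!j - (if j = Suc d then 0 else s!j))) ` {..<d}
            = (\<lambda>j. - (x!j - s!j)) ` {..<d}"
        using lx by (auto simp: nth_append intro!: image_cong)
      moreover have "(if Suc d = Suc d then 1 else -1) * (?v!Suc d - (if Suc d = Suc d then 0 else s!Suc d)) = P"
        using lx by (simp add: nth_append)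
      ultimately show ?thesis using fin by (simp add: Max_insert)
    qed
    also have "max P (Max ((\<lambda>j. - (x!j - s!j)) ` {..<d})) = linf_dist x s"
      unfolding P_def using max_abs_Max[OF fin, of "\<lambda>j. x!j - s!j"] linf_dist_Max[OF lx ls] by simp
    finally have e2: "linf_dist ?v (fst ?g) + snd ?g = Q" unfolding Q_def by simp
    show ?thesis unfolding eval_layer_def LB_def
      using eval_copies[OF lv _ vb C refl lx] e1 e2 by (simp add: case_prod_beta)
  qed
  moreover
  have "eval_layer (LC d C) (x @ [N, Q]) = x @ [max N (-Q), N]"
  proof -
    let ?v = "x @ [N, Q]"
    have lv: "length ?v = d + 2" using lx by simp
    have vb: "\<forall>j<d+2. \<bar>?v!j\<bar> \<le> R" using state_bound[OF lx xR N QR] .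
    have e1: "linf_dist ?v (fst (cp (d+2) C d)) + snd (cp (d+2) C d) = N"
      using cp_eval[OF lv _ vb C, of d] lx by (simp add: nth_append)
    let ?g = "gn (d+2) C {d, Suc d} (\<lambda>j. if j = d then 1 else -1) (\<lambda>_. 0) 0"
    have "linf_dist ?v (fst ?g) + snd ?g
        = Max ((\<lambda>j. (if j = d then 1 else -1) * (?v!j - 0)) ` {d, Suc d}) + 0"
      using gn_eval[OF lv _ _ vb, of "{d, Suc d}" "\<lambda>_. 0" "\<lambda>j. if j = d then 1 else -1" C 0] C R
      by auto
    also have "\<dots> = max N (-Q)" using lx by (simp add: nth_append)
    finally have e2: "linf_dist ?v (fst ?g) + snd ?g = max N (-Q)" .
    show ?thesis unfolding eval_layer_def LC_def
      using eval_copies[OF lv _ vb C refl lx] e1 e2 by (simp add: case_prod_beta)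
  qed
  ultimately show ?thesis unfolding Q_def by simp
qed


lemma floor_eq_close:
  fixes a b \<delta> :: real
  assumes "\<delta> > 0" "\<lfloor>a/\<delta>\<rfloor> = \<lfloor>b/\<delta>\<rfloor>"
  shows "\<bar>a - b\<bar> < \<delta>"
proof -
  have f: "real_of_int \<lfloor>a/\<delta>\<rfloor> = real_of_int \<lfloor>b/\<delta>\<rfloor>" using assms(2) by simp
  have h: "real_of_int \<lfloor>a/\<delta>\<rfloor> \<le> a/\<delta>" "a/\<delta> < real_of_int \<lfloor>a/\<delta>\<rfloor> + 1"
    "real_of_int \<lfloor>b/\<delta>\<rfloor> \<le> b/\<delta>" "b/\<delta> < real_of_int \<lfloor>b/\<delta>\<rfloor> + 1"
    by (rule of_int_floor_le real_of_int_floor_add_one_gt)+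
  have u: "a/\<delta> - b/\<delta> < 1" "b/\<delta> - a/\<delta> < 1" using f h by linarith+
  have e1: "(a/\<delta> - b/\<delta>) * \<delta> = a - b" "(b/\<delta> - a/\<delta>) * \<delta> = b - a" using assms(1) by (simp_all add: field_simps)
  have "(a/\<delta> - b/\<delta>) * \<delta> < 1 * \<delta>" "(b/\<delta> - a/\<delta>) * \<delta> < 1 * \<delta>"
    using u assms(1) by (intro mult_strict_right_mono; simp)+
  then have "a - b < \<delta>" "b - a < \<delta>" using e1 by simp_all
  then show ?thesis by linarith
qed

lemma finite_net:
  fixes K :: "real list set"
  assumes \<delta>: "\<delta> > 0" and dim: "\<forall>x\<in>K. length x = d" and bd: "\<forall>x\<in>K. \<forall>j<d. \<bar>x!j\<bar> \<le> M"
  shows "\<exists>ss. set ss \<subseteq> K \<and> (\<forall>x\<in>K. \<exists>s\<in>set ss. \<forall>j<d. \<bar>x!j - s!j\<bar> < \<delta>)"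
proof -
  define cell where "cell = (\<lambda>x::real list. map (\<lambda>a. \<lfloor>a/\<delta>\<rfloor>) x)"
  define k where "k = \<lceil>M/\<delta>\<rceil>"
  have sub: "cell ` K \<subseteq> {l. set l \<subseteq> {-k..k} \<and> length l = d}"
  proof
    fix l assume "l \<in> cell ` K"
    then obtain x where x: "x \<in> K" "l = cell x" by auto
    have "\<lfloor>a/\<delta>\<rfloor> \<in> {-k..k}" if "a \<in> set x" for a
    proof -
      obtain j where j: "j < length x" "a = x!j" using \<open>a \<in> set x\<close> by (auto simp: in_set_conv_nth)
      have "\<bar>a\<bar> \<le> M" using bd x j dim by auto
      then have "-M \<le> a" "a \<le> M" by linarith+
      then have "-M/\<delta> \<le> a/\<delta>" "a/\<delta> \<le> M/\<delta>" using \<delta>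
        by (intro divide_right_mono; simp)+
      moreover have "M/\<delta> \<le> real_of_int k" unfolding k_def by (rule le_of_int_ceiling)
      ultimately have "- real_of_int k \<le> a/\<delta>" "a/\<delta> \<le> real_of_int k" by simp_all
      then have "-k \<le> \<lfloor>a/\<delta>\<rfloor>" "\<lfloor>a/\<delta>\<rfloor> \<le> k" by (simp_all add: le_floor_iff floor_le_iff)
      then show ?thesis by simp
    qed
    then show "l \<in> {l. set l \<subseteq> {-k..k} \<and> length l = d}" using x dim by (auto simp: cell_def)
  qed
  have finc: "finite (cell ` K)" by (rule finite_subset[OF sub finite_lists_length_eq]) simp
  define rep where "rep = (\<lambda>c. SOME y. y \<in> K \<and> cell y = c)"
  have rep: "rep (cell x) \<in> K \<and> cell (rep (cell x)) = cell x" if "x \<in> K" for x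
    unfolding rep_def by (rule someI[of _ x]) (simp add: that)
  have finr: "finite (rep ` cell ` K)" using finc by (rule finite_imageI)
  obtain ss where ss: "set ss = rep ` cell ` K" using finite_list[OF finr] by (elim exE)
  have "set ss \<subseteq> K"
  proof
    fix y assume "y \<in> set ss"
    then obtain x where x: "x \<in> K" "y = rep (cell x)" unfolding ss by (elim imageE) simp
    then show "y \<in> K" using rep[OF x(1)] by simp
  qed
  moreover have "\<exists>s\<in>set ss. \<forall>j<d. \<bar>x!j - s!j\<bar> < \<delta>" if x: "x \<in> K" for x
  proof (intro bexI allI impI)
    show "rep (cell x) \<in> set ss" unfolding ss using x by (intro imageI)
    fix j assume j: "j < d"
    have r: "cell (rep (cell x)) = cell x" using rep[OF x] by (rule conjunct2)
    have lr: "length (rep (cell x)) = d" using dim rep[OF x] by blast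
    have "cell (rep (cell x)) ! j = cell x ! j" unfolding r ..
    then have "\<lfloor>rep (cell x) ! j / \<delta>\<rfloor> = \<lfloor>x ! j / \<delta>\<rfloor>" using j dim x lr by (simp add: cell_def)
    then show "\<bar>x!j - rep (cell x) ! j\<bar> < \<delta>" by (intro floor_eq_close[OF \<delta>]) simp
  qed
  ultimately show ?thesis by blast
qed

lemma run_eval:
  assumes lx: "length x = d" and d: "d > 0" and xM: "\<forall>j<d. \<bar>x!j\<bar> \<le> M"
    and ss: "\<forall>s\<in>set ss. length s = d \<and> (\<forall>j<d. \<bar>s!j\<bar> \<le> M) \<and> \<bar>a s\<bar> \<le> G"
    and R: "2*M + G \<le> R" "M \<ge> 0" "G \<ge> 0" and C: "3*R < C"
    and N: "\<bar>N\<bar> \<le> R" and T: "\<bar>T\<bar> \<le> R"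
  shows "\<exists>T'. foldl (\<lambda>v ly. eval_layer ly v) (x @ [N, T]) (concat (map (\<lambda>s. [LA d C s, LB d C s (a s), LC d C]) ss))
           = x @ [foldl (\<lambda>n s. max n (-(a s + linf_dist x s))) N ss, T']
         \<and> \<bar>foldl (\<lambda>n s. max n (-(a s + linf_dist x s))) N ss\<bar> \<le> R \<and> \<bar>T'\<bar> \<le> R"
  using ss N T
proof (induction ss arbitrary: N T)
  case Nil then show ?case by auto
next
  case (Cons s ss)
  have s: "length s = d" "\<forall>j<d. \<bar>s!j\<bar> \<le> M" "\<bar>a s\<bar> \<le> G" using Cons.prems by auto
  define N1 where "N1 = max N (-(a s + linf_dist x s))"
  have e: "foldl (\<lambda>v ly. eval_layer ly v) (x @ [N, T]) [LA d C s, LB d C s (a s), LC d C] = x @ [N1, N]"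
    using step_eval[OF lx s(1) d xM s(2) s(3) Cons.prems(2,3) R C] by (simp add: N1_def)
  have N1R: "\<bar>N1\<bar> \<le> R" using Cons.prems(2) s(3) linf_dist_ge0[of x s] R unfolding N1_def by auto
  obtain T' where T': "foldl (\<lambda>v ly. eval_layer ly v) (x @ [N1, N]) (concat (map (\<lambda>s. [LA d C s, LB d C s (a s), LC d C]) ss))
           = x @ [foldl (\<lambda>n s. max n (-(a s + linf_dist x s))) N1 ss, T']
         \<and> \<bar>foldl (\<lambda>n s. max n (-(a s + linf_dist x s))) N1 ss\<bar> \<le> R \<and> \<bar>T'\<bar> \<le> R"
    using Cons.IH[of N1 N] Cons.prems N1R by auto
  have f1: "foldl (\<lambda>v ly. eval_layer ly v) (x @ [N, T]) (concat (map (\<lambda>s. [LA d C s, LB d C s (a s), LC d C]) (s # ss)))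
     = foldl (\<lambda>v ly. eval_layer ly v) (x @ [N1, N]) (concat (map (\<lambda>s. [LA d C s, LB d C s (a s), LC d C]) ss))"
    unfolding list.map concat.simps foldl_append e ..
  have f2: "foldl (\<lambda>n s. max n (-(a s + linf_dist x s))) N (s # ss) = foldl (\<lambda>n s. max n (-(a s + linf_dist x s))) N1 ss"
    unfolding foldl_Cons N1_def ..
  show ?case unfolding f1 f2 using T' by blast
qed

lemma fold_max_ge_init: "(N::real) \<le> foldl (\<lambda>n s. max n (h s)) N ss"
proof (induction ss arbitrary: N)
  case Nil then show ?case by simp
next
  case (Cons t ss)
  have "max N (h t) \<le> foldl (\<lambda>n s. max n (h s)) (max N (h t)) ss" by (rule Cons.IH)
  then show ?case by simp
qed

lemma fold_max_ge: "s \<in> set ss \<Longrightarrow> (h s::real) \<le> foldl (\<lambda>n s. max n (h s)) N ss"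
proof (induction ss arbitrary: N)
  case Nil then show ?case by simp
next
  case (Cons t ss)
  show ?case
  proof (cases "s = t")
    case True then show ?thesis using fold_max_ge_init[of "max N (h t)" h ss] by auto
  next
    case False
    then have "s \<in> set ss" using Cons.prems by simp
    then have "h s \<le> foldl (\<lambda>n s. max n (h s)) (max N (h t)) ss" by (rule Cons.IH)
    then show ?thesis by simp
  qed
qed

lemma fold_max_le: "(N::real) \<le> U \<Longrightarrow> \<forall>s\<in>set ss. h s \<le> U \<Longrightarrow> foldl (\<lambda>n s. max n (h s)) N ss \<le> U"
proof (induction ss arbitrary: N)
  case Nil then show ?case by simp
next
  case (Cons t ss)
  have "max N (h t) \<le> U" using Cons.prems by simp
  then have "foldl (\<lambda>n s. max n (h s)) (max N (h t)) ss \<le> U" using Cons.IH Cons.prems(2) by simp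
  then show ?case by simp
qed

definition L0 :: "nat \<Rightarrow> real \<Rightarrow> real \<Rightarrow> layer" where
  "L0 d C B = map (cp d C) [0..<d] @ [gn d C {..<d} (\<lambda>_. 1) (\<lambda>_. 0) (-B), gn d C {..<d} (\<lambda>_. 1) (\<lambda>_. 0) (-B)]"

definition Lf :: "nat \<Rightarrow> real \<Rightarrow> layer" where
  "Lf d C = [cp (d+2) C d]"

lemma wf_snoc:
  assumes "\<forall>ly\<in>set Ls. ly \<noteq> [] \<and> length ly = n \<and> (\<forall>(w, b)\<in>set ly. length w = n)"
    and "ly \<noteq> []" "\<forall>(w, b)\<in>set ly. length w = n"
  shows "wf_layers n (Ls @ [ly])"
  using assms by (induction Ls) auto

lemma layer_ok:
  "ly \<in> set (concat (map (\<lambda>s. [LA d C s, LB d C s (a s), LC d C]) ss)) \<Longrightarrow>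
     ly \<noteq> [] \<and> length ly = d+2 \<and> (\<forall>(w, b)\<in>set ly. length w = d+2)"
  by (auto simp: LA_def LB_def LC_def cp_def gn_def)

theorem theorem1:
  fixes d :: nat and K :: "real list set" and g' :: "real list \<Rightarrow> real"
  assumes dim: "\<forall>x\<in>K. length x = d"
    and bdd: "\<exists>M. \<forall>x\<in>K. linf_norm x \<le> M"
    and lip: "\<forall>x1\<in>K. \<forall>x2\<in>K. \<bar>g' x1 - g' x2\<bar> \<le> linf_dist x1 x2"
    and eps: "\<epsilon> > 0"
  shows "\<exists>N. scalar_net d N \<and> width N \<le> d + 2 \<and>
           (\<forall>x\<in>K. \<bar>net_fun N x - g' x\<bar> \<le> \<epsilon>)"
proof (cases "d = 0")
  case True
  define NN :: net where "NN = [[([], - g' [])]]"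
  have "scalar_net d NN" using True by (simp add: NN_def scalar_net_def wf_net_def)
  moreover have "width NN \<le> d + 2" by (simp add: NN_def width_def)
  moreover have "\<forall>x\<in>K. \<bar>net_fun NN x - g' x\<bar> \<le> \<epsilon>"
  proof
    fix x assume "x \<in> K"
    then have "x = []" using dim True by auto
    then show "\<bar>net_fun NN x - g' x\<bar> \<le> \<epsilon>" using eps
      by (simp add: NN_def net_fun_def eval_net_def eval_layer_def linf_dist_def linf_norm_def)
  qed
  ultimately show ?thesis by blast
next
  case False
  then have d: "d > 0" by simp
  obtain M0 where M0: "\<forall>x\<in>K. linf_norm x \<le> M0" using bdd by blast
  define M where "M = max M0 0"
  have M: "M \<ge> 0" by (simp add: M_def)
  have xM: "\<forall>j<d. \<bar>x!j\<bar> \<le> M" if "x \<in> K" for x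
    using linf_norm_nth[of _ x] M0 that dim unfolding M_def by (metis max.coboundedI1 order_trans)
  define \<delta> where "\<delta> = \<epsilon>/2"
  have \<delta>: "\<delta> > 0" using eps by (simp add: \<delta>_def)
  obtain ss where ssK: "set ss \<subseteq> K" and ssnet: "\<forall>x\<in>K. \<exists>s\<in>set ss. \<forall>j<d. \<bar>x!j - s!j\<bar> < \<delta>"
    using finite_net[OF \<delta> dim, of M] xM by blast
  define G where "G = Max (insert 0 ((\<lambda>s. \<bar>g' s\<bar>) ` set ss))"
  have G: "G \<ge> 0" "\<forall>s\<in>set ss. \<bar>g' s\<bar> \<le> G" by (auto simp: G_def)
  define R where "R = 4*M + G + 1"
  define C where "C = 3*R + 1"
  define B where "B = 3*M + G"
  have RC: "2*M + G \<le> R" "3*R < C" by (auto simp: R_def C_def M)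
  have ssok: "\<forall>s\<in>set ss. length s = d \<and> (\<forall>j<d. \<bar>s!j\<bar> \<le> M) \<and> \<bar>g' s\<bar> \<le> G"
    using ssK dim xM G by auto
  define Mid where "Mid = concat (map (\<lambda>s. [LA d C s, LB d C s (g' s), LC d C]) ss)"
  define NN where "NN = L0 d C B # (Mid @ [Lf d C])"
  have wf: "scalar_net d NN"
  proof -
    have "wf_layers (d+2) (Mid @ [Lf d C])"
    proof (rule wf_snoc)
      show "\<forall>ly\<in>set Mid. ly \<noteq> [] \<and> length ly = d + 2 \<and> (\<forall>(w, b)\<in>set ly. length w = d + 2)"
        using layer_ok[of _ d C g' ss] unfolding Mid_def by blast
    qed (auto simp: Lf_def cp_def gn_def)
    moreover have "L0 d C B \<noteq> []" "\<forall>(w, b)\<in>set (L0 d C B). length w = d"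
      by (auto simp: L0_def cp_def gn_def)
    moreover have "length (L0 d C B) = d + 2" by (simp add: L0_def)
    ultimately show ?thesis by (simp add: scalar_net_def wf_net_def NN_def Lf_def)
  qed
  have wd: "width NN \<le> d + 2"
  proof -
    have "\<forall>l\<in>set (map length NN). l \<le> d + 2"
      using layer_ok[of _ d C g' ss] by (auto simp: NN_def Mid_def L0_def Lf_def)
    then show ?thesis unfolding width_def by (subst Max_le_iff) auto
  qed
  have approx: "\<bar>net_fun NN x - g' x\<bar> \<le> \<epsilon>" if x: "x \<in> K" for x
  proof -
    have lx: "length x = d" using dim x by auto
    have xR: "\<forall>j<d. \<bar>x!j\<bar> \<le> R" using xM[OF x] RC M G by force
    define N0 where "N0 = Max ((\<lambda>j. x!j) ` {..<d}) - B"
    have fin: "finite {..<d}" "{..<d} \<noteq> {}" using d by auto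
    have Min: "Max ((\<lambda>j. x!j) ` {..<d}) \<in> (\<lambda>j. x!j) ` {..<d}" using fin by simp
    obtain j0 where j0: "j0 < d" "Max ((\<lambda>j. x!j) ` {..<d}) = x!j0" using Min by auto
    have xj0: "\<bar>x!j0\<bar> \<le> M" using xM[OF x] j0(1) by blast
    have N0R: "\<bar>N0\<bar> \<le> R" "N0 \<le> M - B" using xj0 G(1) M unfolding N0_def R_def B_def j0(2) by linarith+
    have e0: "eval_layer (L0 d C B) x = x @ [N0, N0]"
    proof -
      have "linf_dist x (fst (gn d C {..<d} (\<lambda>_. 1) (\<lambda>_. 0) (-B))) + snd (gn d C {..<d} (\<lambda>_. 1) (\<lambda>_. 0) (-B))
          = Max ((\<lambda>j. 1 * (x!j - 0)) ` {..<d}) + (-B)"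
        using gn_eval[OF lx _ _ xR, of "{..<d}" "\<lambda>_. 0" "\<lambda>_. 1" C "-B"] fin RC M G by auto
      then have "linf_dist x (fst (gn d C {..<d} (\<lambda>_. 1) (\<lambda>_. 0) (-B))) + snd (gn d C {..<d} (\<lambda>_. 1) (\<lambda>_. 0) (-B)) = N0"
        by (simp add: N0_def)
      then show ?thesis unfolding eval_layer_def L0_def
        using eval_copies[OF lx order_refl xR RC(2) append_Nil2[symmetric] lx] by (simp add: case_prod_beta)
    qed
    define Nf where "Nf = foldl (\<lambda>n s. max n (-(g' s + linf_dist x s))) N0 ss"
    obtain T' where T': "foldl (\<lambda>v ly. eval_layer ly v) (x @ [N0, N0]) Mid = x @ [Nf, T']" "\<bar>Nf\<bar> \<le> R" "\<bar>T'\<bar> \<le> R"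
      using run_eval[OF lx d xM[OF x] ssok RC(1) M G(1) RC(2) N0R(1) N0R(1)] unfolding Mid_def Nf_def by blast
    have ev: "eval_net NN x = [Nf]"
    proof -
      have "eval_net NN x = eval_layer (Lf d C) (x @ [Nf, T'])"
        unfolding eval_net_def NN_def foldl_Cons e0 foldl_append T'(1) by simp
      also have "\<dots> = [Nf]"
        using cp_eval[of "x @ [Nf, T']" "d+2" d R C] lx state_bound[OF lx xR T'(2,3)] RC
        by (simp add: Lf_def eval_layer_def case_prod_beta nth_append)
      finally show ?thesis .
    qed
    have dist2M: "linf_dist x s \<le> 2*M" if "s \<in> set ss" for s
      using linf_dist_le[OF lx, of s "2*M"] ssok that xM[OF x] M
      by (smt (verit, best) abs_triangle_ineq4)
    have up: "Nf \<le> - g' x"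
    proof -
      have "\<forall>s\<in>set ss. -(g' s + linf_dist x s) \<le> - g' x"
        using lip x ssK by (smt (verit, best) subsetD)
      moreover have "N0 \<le> - g' x"
      proof -
        obtain s where s: "s \<in> set ss" using ssnet x by blast
        have "g' x - g' s \<le> linf_dist x s" using lip x ssK s by (smt (verit, best) subsetD)
        then show ?thesis using N0R(2) dist2M[OF s] G s unfolding B_def by force
      qed
      ultimately show ?thesis unfolding Nf_def by (intro fold_max_le)
    qed
    have low: "Nf \<ge> - g' x - \<epsilon>"
    proof -
      obtain s where s: "s \<in> set ss" "\<forall>j<d. \<bar>x!j - s!j\<bar> < \<delta>" using ssnet x by blast
      have ls: "length s = d" using ssok s by auto
      have d1: "linf_dist x s \<le> \<delta>" using linf_dist_le[OF lx ls, of \<delta>] s \<delta> by force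
      have d2: "linf_dist s x \<le> \<delta>" using linf_dist_le[OF ls lx, of \<delta>] s \<delta> by (force simp: abs_minus_commute)
      have "g' s - g' x \<le> linf_dist s x" using lip x ssK s by (smt (verit, best) subsetD)
      then have "-(g' s + linf_dist x s) \<ge> - g' x - \<epsilon>" using d1 d2 unfolding \<delta>_def by linarith
      moreover have "-(g' s + linf_dist x s) \<le> Nf" unfolding Nf_def
        using fold_max_ge[OF s(1), of "\<lambda>s. -(g' s + linf_dist x s)" N0] by simp
      ultimately show ?thesis by linarith
    qed
    show ?thesis using up low ev by (simp add: net_fun_def)
  qed
  show ?thesis using wf wd approx by blast
qed

end
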